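(* Let $H$ be a Hopf algebra over $\Bbbk$ which is generated as an algebra by a simple subcoalgebra $D$ of dimension $4$, and let $\pi:H\to H_4$ be a surjective Hopf algebra map onto the Sweedler Hopf algebra $H_4$. Then $\dim {}^{\mathrm{co}\,\pi}D\geq 2$ or $\dim D^{\mathrm{co}\,\pi}\geq 2$.
   Context: $\Bbbk$ is an algebraically closed field of characteristic $0$, Hopf algebras finite dimensional. The Sweedler Hopf algebra $H_4$ is generated as an algebra by $g,x$ with $g^2=1$, $x^2=0$, $gx=-xg$, where $g$ is grouplike and $\Delta(x)=x\otimes 1+g\otimes x$. For a subcoalgebra $D$ of $H$, $D^{\mathrm{co}\,\pi}=\{d\in D:(\mathrm{id}\otimes\pi)\Delta(d)=d\otimes 1\}$ and ${}^{\mathrm{co}\,\pi}D=\{d\in D:(\pi\otimes\mathrm{id})\Delta(d)=1\otimes d\}$. *)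

theory Defs
  imports "HOL-Analysis.Analysis" "HOL-Computational_Algebra.Polynomial"
begin

section \<open>Finite-dimensional Hopf algebras via structure constants\<close>

text \<open>A finite-dimensional algebra/coalgebra H over a field 'k is given by a basis indexed
by a finite type 'b; elements are vectors of type 'k^'b, and H tensor H is identified with
'k^('b \<times> 'b).  Structure constants:
  e_i e_j = sum_l hmul i j l e_l;   1 = sum_l hunit l e_l;
  Delta(e_l) = sum_{i,j} hcomul l i j e_i (x) e_j;  eps(e_l) = hcounit l;
  S(e_i) = sum_l hantip i l e_l.\<close>

record ('b, 'k) hopf_sc =
  hmul :: "'b \<Rightarrow> 'b \<Rightarrow> 'b \<Rightarrow> 'k"
  hunit :: "'b \<Rightarrow> 'k"
  hcomul :: "'b \<Rightarrow> 'b \<Rightarrow> 'b \<Rightarrow> 'k"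
  hcounit :: "'b \<Rightarrow> 'k"
  hantip :: "'b \<Rightarrow> 'b \<Rightarrow> 'k"

definition kd :: "'b \<Rightarrow> 'b \<Rightarrow> 'k::ring_1" where
  "kd i j = (if i = j then 1 else 0)"

definition is_hopf :: "('b::finite, 'k::field) hopf_sc \<Rightarrow> bool" where
  "is_hopf A \<longleftrightarrow>
     (let m = hmul A; u = hunit A; c = hcomul A; e = hcounit A; S = hantip A in
      \<comment> \<open>associativity\<close>
      (\<forall>i j k l. (\<Sum>p\<in>UNIV. m i j p * m p k l) = (\<Sum>p\<in>UNIV. m j k p * m i p l)) \<and>
      \<comment> \<open>unit\<close>
      (\<forall>i l. (\<Sum>p\<in>UNIV. u p * m p i l) = kd i l \<and> (\<Sum>p\<in>UNIV. u p * m i p l) = kd i l) \<and>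
      \<comment> \<open>coassociativity\<close>
      (\<forall>l i j k. (\<Sum>p\<in>UNIV. c l p k * c p i j) = (\<Sum>p\<in>UNIV. c l i p * c p j k)) \<and>
      \<comment> \<open>counit\<close>
      (\<forall>l j. (\<Sum>p\<in>UNIV. e p * c l p j) = kd l j \<and> (\<Sum>p\<in>UNIV. e p * c l j p) = kd l j) \<and>
      \<comment> \<open>comultiplication is an algebra map\<close>
      (\<forall>i j a b. (\<Sum>l\<in>UNIV. m i j l * c l a b) =
          (\<Sum>p\<in>UNIV. \<Sum>q\<in>UNIV. \<Sum>r\<in>UNIV. \<Sum>s\<in>UNIV. c i p q * c j r s * m p r a * m q s b)) \<and>
      (\<forall>a b. (\<Sum>l\<in>UNIV. u l * c l a b) = u a * u b) \<and>
      \<comment> \<open>counit is an algebra map\<close>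
      (\<forall>i j. (\<Sum>l\<in>UNIV. m i j l * e l) = e i * e j) \<and>
      (\<Sum>l\<in>UNIV. u l * e l) = 1 \<and>
      \<comment> \<open>antipode\<close>
      (\<forall>l a. (\<Sum>p\<in>UNIV. \<Sum>q\<in>UNIV. \<Sum>r\<in>UNIV. c l p q * S p r * m r q a) = e l * u a) \<and>
      (\<forall>l a. (\<Sum>p\<in>UNIV. \<Sum>q\<in>UNIV. \<Sum>r\<in>UNIV. c l p q * S q r * m p r a) = e l * u a))"

subsection \<open>Element-level operations\<close>

definition hmulv :: "('b::finite, 'k::field) hopf_sc \<Rightarrow> 'k^'b \<Rightarrow> 'k^'b \<Rightarrow> 'k^'b" where
  "hmulv A x y = (\<chi> l. \<Sum>i\<in>UNIV. \<Sum>j\<in>UNIV. x$i * y$j * hmul A i j l)"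

definition honev :: "('b::finite, 'k::field) hopf_sc \<Rightarrow> 'k^'b" where
  "honev A = (\<chi> l. hunit A l)"

definition hcomulv :: "('b::finite, 'k::field) hopf_sc \<Rightarrow> 'k^'b \<Rightarrow> 'k^('b \<times> 'b)" where
  "hcomulv A x = (\<chi> p. \<Sum>l\<in>UNIV. x$l * hcomul A l (fst p) (snd p))"

definition hcounitv :: "('b::finite, 'k::field) hopf_sc \<Rightarrow> 'k^'b \<Rightarrow> 'k" where
  "hcounitv A x = (\<Sum>l\<in>UNIV. x$l * hcounit A l)"

definition hantipv :: "('b::finite, 'k::field) hopf_sc \<Rightarrow> 'k^'b \<Rightarrow> 'k^'b" where
  "hantipv A x = (\<chi> l. \<Sum>i\<in>UNIV. x$i * hantip A i l)"

text \<open>Simple tensors u (x) v and the tensor product f (x) g of linear maps.\<close>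

definition tens :: "'k::field^'a::finite \<Rightarrow> 'k^'b::finite \<Rightarrow> 'k^('a \<times> 'b)" where
  "tens u v = (\<chi> p. u$(fst p) * v$(snd p))"

definition tmap :: "('k::field^'a::finite \<Rightarrow> 'k^'c::finite) \<Rightarrow> ('k^'b::finite \<Rightarrow> 'k^'d::finite)
     \<Rightarrow> 'k^('a \<times> 'b) \<Rightarrow> 'k^('c \<times> 'd)" where
  "tmap f g t = (\<Sum>i\<in>UNIV. \<Sum>j\<in>UNIV. t$(i,j) *s tens (f (axis i 1)) (g (axis j 1)))"

text \<open>Tensor product U (x) V of subspaces, as a subspace of H (x) H.\<close>
definition tens_sub :: "('k::field^'a::finite) set \<Rightarrow> ('k^'b::finite) set \<Rightarrow> ('k^('a \<times> 'b)) set" where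
  "tens_sub U V = vec.span {tens u v | u v. u \<in> U \<and> v \<in> V}"

subsection \<open>Subcoalgebras, subalgebras, Hopf maps, coinvariants\<close>

definition subcoalg :: "('b::finite, 'k::field) hopf_sc \<Rightarrow> ('k^'b) set \<Rightarrow> bool" where
  "subcoalg A D \<longleftrightarrow> vec.subspace D \<and> (\<forall>d\<in>D. hcomulv A d \<in> tens_sub D D)"

definition simple_subcoalg :: "('b::finite, 'k::field) hopf_sc \<Rightarrow> ('k^'b) set \<Rightarrow> bool" where
  "simple_subcoalg A D \<longleftrightarrow> subcoalg A D \<and> D \<noteq> {0} \<and>
     (\<forall>E. subcoalg A E \<and> E \<subseteq> D \<longrightarrow> E = {0} \<or> E = D)"

definition subalg :: "('b::finite, 'k::field) hopf_sc \<Rightarrow> ('k^'b) set \<Rightarrow> bool" where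
  "subalg A S \<longleftrightarrow> vec.subspace S \<and> honev A \<in> S \<and> (\<forall>x\<in>S. \<forall>y\<in>S. hmulv A x y \<in> S)"

text \<open>H is generated as an algebra by D: the only subalgebra containing D is H.\<close>
definition generates_alg :: "('b::finite, 'k::field) hopf_sc \<Rightarrow> ('k^'b) set \<Rightarrow> bool" where
  "generates_alg A D \<longleftrightarrow> (\<forall>S. subalg A S \<and> D \<subseteq> S \<longrightarrow> S = UNIV)"

definition hopf_map :: "('b::finite, 'k::field) hopf_sc \<Rightarrow> ('c::finite, 'k) hopf_sc
     \<Rightarrow> ('k^'b \<Rightarrow> 'k^'c) \<Rightarrow> bool" where
  "hopf_map A B f \<longleftrightarrow> Vector_Spaces.linear (*s) (*s) f \<and>
     (\<forall>x y. f (hmulv A x y) = hmulv B (f x) (f y)) \<and> f (honev A) = honev B \<and>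
     (\<forall>x. tmap f f (hcomulv A x) = hcomulv B (f x)) \<and>
     (\<forall>x. hcounitv B (f x) = hcounitv A x) \<and>
     (\<forall>x. f (hantipv A x) = hantipv B (f x))"

text \<open>D^{co pi} and {}^{co pi}D.\<close>
definition right_coinv :: "('b::finite, 'k::field) hopf_sc \<Rightarrow> ('c::finite, 'k) hopf_sc
     \<Rightarrow> ('k^'b \<Rightarrow> 'k^'c) \<Rightarrow> ('k^'b) set \<Rightarrow> ('k^'b) set" where
  "right_coinv A B f D = {d \<in> D. tmap id f (hcomulv A d) = tens d (honev B)}"

definition left_coinv :: "('b::finite, 'k::field) hopf_sc \<Rightarrow> ('c::finite, 'k) hopf_sc
     \<Rightarrow> ('k^'b \<Rightarrow> 'k^'c) \<Rightarrow> ('k^'b) set \<Rightarrow> ('k^'b) set" where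
  "left_coinv A B f D = {d \<in> D. tmap f id (hcomulv A d) = tens (honev B) d}"

section \<open>The Sweedler Hopf algebra H4\<close>

text \<open>Basis 1, g, x, gx.\<close>
datatype sw = S1 | Sg | Sx | Sgx

lemma UNIV_sw: "(UNIV :: sw set) = {S1, Sg, Sx, Sgx}"
  using sw.exhaust by auto

instance sw :: finite
  by standard (simp add: UNIV_sw)

text \<open>Product of basis elements: (sign, basis element); sign 0 means the product is 0.\<close>
fun sw_prod :: "sw \<Rightarrow> sw \<Rightarrow> int \<times> sw" where
  "sw_prod S1 b = (1, b)"
| "sw_prod a S1 = (1, a)"
| "sw_prod Sg Sg = (1, S1)"
| "sw_prod Sg Sx = (1, Sgx)"
| "sw_prod Sg Sgx = (1, Sx)"
| "sw_prod Sx Sg = (-1, Sgx)"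
| "sw_prod Sx Sx = (0, S1)"
| "sw_prod Sx Sgx = (0, S1)"
| "sw_prod Sgx Sg = (-1, Sx)"
| "sw_prod Sgx Sx = (0, S1)"
| "sw_prod Sgx Sgx = (0, S1)"

fun sw_coterms :: "sw \<Rightarrow> (sw \<times> sw) set" where
  "sw_coterms S1 = {(S1, S1)}"
| "sw_coterms Sg = {(Sg, Sg)}"
| "sw_coterms Sx = {(Sx, S1), (Sg, Sx)}"
| "sw_coterms Sgx = {(Sgx, Sg), (S1, Sgx)}"

fun sw_antip :: "sw \<Rightarrow> int \<times> sw" where
  "sw_antip S1 = (1, S1)"
| "sw_antip Sg = (1, Sg)"
| "sw_antip Sx = (-1, Sgx)"
| "sw_antip Sgx = (1, Sx)"

definition sweedler :: "(sw, 'k::field) hopf_sc" where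
  "sweedler =
     \<lparr> hmul = (\<lambda>a b c. if snd (sw_prod a b) = c then of_int (fst (sw_prod a b)) else 0),
       hunit = (\<lambda>c. if c = S1 then 1 else 0),
       hcomul = (\<lambda>c a b. if (a, b) \<in> sw_coterms c then 1 else 0),
       hcounit = (\<lambda>c. if c = S1 \<or> c = Sg then 1 else 0),
       hantip = (\<lambda>a c. if snd (sw_antip a) = c then of_int (fst (sw_antip a)) else 0) \<rparr>"

definition alg_closed_field :: "'k::field itself \<Rightarrow> bool" where
  "alg_closed_field _ \<longleftrightarrow> (\<forall>p :: 'k poly. degree p > 0 \<longrightarrow> (\<exists>z. poly p z = 0))"

end

theory Submission imports Defs begin


definition pr :: "'k::field^'b::finite \<Rightarrow> 'k^'b \<Rightarrow> 'k" where
  "pr w h = (\<Sum>l\<in>UNIV. w$l * h$l)"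

lemma rot2: "(\<Sum>a\<in>A. \<Sum>b\<in>B. \<Sum>c\<in>C. f a b c) = (\<Sum>b\<in>B. \<Sum>c\<in>C. \<Sum>a\<in>A. f a b c)"
proof -
  have "(\<Sum>a\<in>A. \<Sum>b\<in>B. \<Sum>c\<in>C. f a b c) = (\<Sum>b\<in>B. \<Sum>a\<in>A. \<Sum>c\<in>C. f a b c)" by (rule sum.swap)
  also have "\<dots> = (\<Sum>b\<in>B. \<Sum>c\<in>C. \<Sum>a\<in>A. f a b c)" by (rule sum.cong[OF refl], rule sum.swap)
  finally show ?thesis .
qed

lemma rot3: "(\<Sum>a\<in>A. \<Sum>b\<in>B. \<Sum>c\<in>C. \<Sum>d\<in>D. f a b c d) = (\<Sum>b\<in>B. \<Sum>c\<in>C. \<Sum>d\<in>D. \<Sum>a\<in>A. f a b c d)"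
proof -
  have "(\<Sum>a\<in>A. \<Sum>b\<in>B. \<Sum>c\<in>C. \<Sum>d\<in>D. f a b c d) = (\<Sum>b\<in>B. \<Sum>a\<in>A. \<Sum>c\<in>C. \<Sum>d\<in>D. f a b c d)" by (rule sum.swap)
  also have "\<dots> = (\<Sum>b\<in>B. \<Sum>c\<in>C. \<Sum>d\<in>D. \<Sum>a\<in>A. f a b c d)" by (rule sum.cong[OF refl], rule rot2)
  finally show ?thesis .
qed

locale hc =
  fixes A :: "('b::finite, 'k::field) hopf_sc"
  assumes coassoc: "\<And>l i j k. (\<Sum>p\<in>UNIV. hcomul A l p k * hcomul A p i j) = (\<Sum>p\<in>UNIV. hcomul A l i p * hcomul A p j k)"
    and counitL: "\<And>l j. (\<Sum>p\<in>UNIV. hcounit A p * hcomul A l p j) = kd l j"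
    and counitR: "\<And>l j. (\<Sum>p\<in>UNIV. hcounit A p * hcomul A l j p) = kd l j"
begin

abbreviation "c \<equiv> hcomul A"

definition conv :: "'k^'b \<Rightarrow> 'k^'b \<Rightarrow> 'k^'b" where
  "conv w v = (\<chi> l. \<Sum>i\<in>UNIV. \<Sum>j\<in>UNIV. c l i j * w$i * v$j)"
definition Rop :: "'k^'b \<Rightarrow> 'k^'b \<Rightarrow> 'k^'b" where
  "Rop w h = (\<chi> i. \<Sum>l\<in>UNIV. \<Sum>j\<in>UNIV. h$l * c l i j * w$j)"
definition Lop :: "'k^'b \<Rightarrow> 'k^'b \<Rightarrow> 'k^'b" where
  "Lop w h = (\<chi> j. \<Sum>l\<in>UNIV. \<Sum>i\<in>UNIV. h$l * c l i j * w$i)"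
definition epsv :: "'k^'b" where "epsv = (\<chi> l. hcounit A l)"

lemma Rop_Rop: "Rop w (Rop v h) = Rop (conv w v) h"
proof -
  have "Rop w (Rop v h) $ i = Rop (conv w v) h $ i" for i
  proof -
    have "Rop w (Rop v h) $ i = (\<Sum>i'\<in>UNIV. \<Sum>k\<in>UNIV. \<Sum>l\<in>UNIV. \<Sum>j\<in>UNIV. h$l * c l i' j * v$j * c i' i k * w$k)"
      unfolding Rop_def by (simp add: sum_distrib_left sum_distrib_right)
    also have "\<dots> = (\<Sum>k\<in>UNIV. \<Sum>l\<in>UNIV. \<Sum>j\<in>UNIV. \<Sum>i'\<in>UNIV. h$l * c l i' j * v$j * c i' i k * w$k)"
      by (rule rot3)
    also have "\<dots> = (\<Sum>l\<in>UNIV. \<Sum>j\<in>UNIV. \<Sum>k\<in>UNIV. \<Sum>i'\<in>UNIV. h$l * c l i' j * v$j * c i' i k * w$k)"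
      by (rule rot2)
    also have "\<dots> = (\<Sum>l\<in>UNIV. \<Sum>j\<in>UNIV. \<Sum>k\<in>UNIV. (h$l * v$j * w$k) * (\<Sum>p\<in>UNIV. c l p j * c p i k))"
      by (simp add: sum_distrib_left mult_ac)
    also have "\<dots> = (\<Sum>l\<in>UNIV. \<Sum>j\<in>UNIV. \<Sum>k\<in>UNIV. (h$l * v$j * w$k) * (\<Sum>p\<in>UNIV. c l i p * c p k j))"
      by (simp add: coassoc)
    also have "\<dots> = (\<Sum>l\<in>UNIV. \<Sum>j\<in>UNIV. \<Sum>k\<in>UNIV. \<Sum>p\<in>UNIV. h$l * c l i p * (c p k j * w$k * v$j))"
      by (simp add: sum_distrib_left mult_ac)
    also have "\<dots> = (\<Sum>l\<in>UNIV. \<Sum>k\<in>UNIV. \<Sum>j\<in>UNIV. \<Sum>p\<in>UNIV. h$l * c l i p * (c p k j * w$k * v$j))"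
      by (rule sum.cong[OF refl], rule sum.swap)
    also have "\<dots> = (\<Sum>l\<in>UNIV. \<Sum>p\<in>UNIV. \<Sum>k\<in>UNIV. \<Sum>j\<in>UNIV. h$l * c l i p * (c p k j * w$k * v$j))"
      by (rule sum.cong[OF refl], rule rot2[symmetric])
    also have "\<dots> = Rop (conv w v) h $ i"
      unfolding Rop_def conv_def by (simp add: sum_distrib_left)
    finally show ?thesis .
  qed
  then show ?thesis by (simp add: vec_eq_iff)
qed


lemma Lop_Lop: "Lop w (Lop v h) = Lop (conv v w) h"
proof -
  have "Lop w (Lop v h) $ j' = Lop (conv v w) h $ j'" for j'
  proof -
    have "Lop w (Lop v h) $ j' = (\<Sum>j\<in>UNIV. \<Sum>i'\<in>UNIV. \<Sum>l\<in>UNIV. \<Sum>i\<in>UNIV. h$l * c l i j * v$i * c j i' j' * w$i')"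
      unfolding Lop_def by (simp add: sum_distrib_left sum_distrib_right)
    also have "\<dots> = (\<Sum>i'\<in>UNIV. \<Sum>l\<in>UNIV. \<Sum>i\<in>UNIV. \<Sum>j\<in>UNIV. h$l * c l i j * v$i * c j i' j' * w$i')"
      by (rule rot3)
    also have "\<dots> = (\<Sum>l\<in>UNIV. \<Sum>i\<in>UNIV. \<Sum>i'\<in>UNIV. \<Sum>j\<in>UNIV. h$l * c l i j * v$i * c j i' j' * w$i')"
      by (rule rot2)
    also have "\<dots> = (\<Sum>l\<in>UNIV. \<Sum>i\<in>UNIV. \<Sum>i'\<in>UNIV. (h$l * v$i * w$i') * (\<Sum>p\<in>UNIV. c l i p * c p i' j'))"
      by (simp add: sum_distrib_left mult_ac)
    also have "\<dots> = (\<Sum>l\<in>UNIV. \<Sum>i\<in>UNIV. \<Sum>i'\<in>UNIV. (h$l * v$i * w$i') * (\<Sum>p\<in>UNIV. c l p j' * c p i i'))"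
      by (simp add: coassoc)
    also have "\<dots> = (\<Sum>l\<in>UNIV. \<Sum>i\<in>UNIV. \<Sum>i'\<in>UNIV. \<Sum>p\<in>UNIV. h$l * c l p j' * (c p i i' * v$i * w$i'))"
      by (simp add: sum_distrib_left mult_ac)
    also have "\<dots> = (\<Sum>l\<in>UNIV. \<Sum>p\<in>UNIV. \<Sum>i\<in>UNIV. \<Sum>i'\<in>UNIV. h$l * c l p j' * (c p i i' * v$i * w$i'))"
      by (rule sum.cong[OF refl], rule rot2[symmetric])
    also have "\<dots> = Lop (conv v w) h $ j'"
      unfolding Lop_def conv_def by (simp add: sum_distrib_left)
    finally show ?thesis .
  qed
  then show ?thesis by (simp add: vec_eq_iff)
qed

lemma Lop_Rop: "Lop w (Rop v h) = Rop v (Lop w h)"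
proof -
  have "Lop w (Rop v h) $ j' = Rop v (Lop w h) $ j'" for j'
  proof -
    have "Lop w (Rop v h) $ j' = (\<Sum>i\<in>UNIV. \<Sum>i'\<in>UNIV. \<Sum>l\<in>UNIV. \<Sum>j\<in>UNIV. h$l * c l i j * v$j * c i i' j' * w$i')"
      unfolding Lop_def Rop_def by (simp add: sum_distrib_left sum_distrib_right)
    also have "\<dots> = (\<Sum>i'\<in>UNIV. \<Sum>l\<in>UNIV. \<Sum>j\<in>UNIV. \<Sum>i\<in>UNIV. h$l * c l i j * v$j * c i i' j' * w$i')"
      by (rule rot3)
    also have "\<dots> = (\<Sum>l\<in>UNIV. \<Sum>j\<in>UNIV. \<Sum>i'\<in>UNIV. \<Sum>i\<in>UNIV. h$l * c l i j * v$j * c i i' j' * w$i')"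
      by (rule rot2)
    also have "\<dots> = (\<Sum>l\<in>UNIV. \<Sum>j\<in>UNIV. \<Sum>i'\<in>UNIV. (h$l * v$j * w$i') * (\<Sum>p\<in>UNIV. c l p j * c p i' j'))"
      by (simp add: sum_distrib_left mult_ac)
    also have "\<dots> = (\<Sum>l\<in>UNIV. \<Sum>j\<in>UNIV. \<Sum>i'\<in>UNIV. (h$l * v$j * w$i') * (\<Sum>p\<in>UNIV. c l i' p * c p j' j))"
      by (simp add: coassoc)
    also have "\<dots> = (\<Sum>l\<in>UNIV. \<Sum>j\<in>UNIV. \<Sum>i'\<in>UNIV. \<Sum>m\<in>UNIV. h$l * c l i' m * w$i' * c m j' j * v$j)"
      by (simp add: sum_distrib_left mult_ac)
    also have "\<dots> = (\<Sum>j\<in>UNIV. \<Sum>l\<in>UNIV. \<Sum>i'\<in>UNIV. \<Sum>m\<in>UNIV. h$l * c l i' m * w$i' * c m j' j * v$j)"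
      by (rule sum.swap)
    also have "\<dots> = (\<Sum>m\<in>UNIV. \<Sum>j\<in>UNIV. \<Sum>l\<in>UNIV. \<Sum>i'\<in>UNIV. h$l * c l i' m * w$i' * c m j' j * v$j)"
      by (rule rot3[symmetric])
    also have "\<dots> = Rop v (Lop w h) $ j'"
      unfolding Lop_def Rop_def by (simp add: sum_distrib_left sum_distrib_right)
    finally show ?thesis .
  qed
  then show ?thesis by (simp add: vec_eq_iff)
qed

lemma pr_Rop: "pr w (Rop v h) = pr (conv w v) h"
proof -
  have "pr w (Rop v h) = (\<Sum>i\<in>UNIV. \<Sum>l\<in>UNIV. \<Sum>j\<in>UNIV. w$i * (h$l * c l i j * v$j))"
    unfolding pr_def Rop_def by (simp add: sum_distrib_left)
  also have "\<dots> = (\<Sum>l\<in>UNIV. \<Sum>i\<in>UNIV. \<Sum>j\<in>UNIV. w$i * (h$l * c l i j * v$j))"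
    by (rule sum.swap)
  also have "\<dots> = pr (conv w v) h"
    unfolding pr_def conv_def by (simp add: sum_distrib_left sum_distrib_right mult_ac)
  finally show ?thesis .
qed

lemma pr_Lop: "pr w (Lop v h) = pr (conv v w) h"
proof -
  have "pr w (Lop v h) = (\<Sum>j\<in>UNIV. \<Sum>l\<in>UNIV. \<Sum>i\<in>UNIV. w$j * (h$l * c l i j * v$i))"
    unfolding pr_def Lop_def by (simp add: sum_distrib_left)
  also have "\<dots> = (\<Sum>l\<in>UNIV. \<Sum>i\<in>UNIV. \<Sum>j\<in>UNIV. w$j * (h$l * c l i j * v$i))"
    by (rule rot2)
  also have "\<dots> = pr (conv v w) h"
    unfolding pr_def conv_def by (simp add: sum_distrib_left sum_distrib_right mult_ac)
  finally show ?thesis .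
qed

lemma conv_assoc: "conv (conv u v) w = conv u (conv v w)"
proof -
  have "conv (conv u v) w $ l = conv u (conv v w) $ l" for l
  proof -
    have "conv (conv u v) w $ l = (\<Sum>p\<in>UNIV. \<Sum>k\<in>UNIV. \<Sum>i\<in>UNIV. \<Sum>j\<in>UNIV. c l p k * (c p i j * u$i * v$j) * w$k)"
      unfolding conv_def by (simp add: sum_distrib_left sum_distrib_right)
    also have "\<dots> = (\<Sum>k\<in>UNIV. \<Sum>i\<in>UNIV. \<Sum>j\<in>UNIV. \<Sum>p\<in>UNIV. c l p k * (c p i j * u$i * v$j) * w$k)"
      by (rule rot3)
    also have "\<dots> = (\<Sum>i\<in>UNIV. \<Sum>j\<in>UNIV. \<Sum>k\<in>UNIV. \<Sum>p\<in>UNIV. c l p k * (c p i j * u$i * v$j) * w$k)"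
      by (rule rot2)
    also have "\<dots> = (\<Sum>i\<in>UNIV. \<Sum>j\<in>UNIV. \<Sum>k\<in>UNIV. (u$i * v$j * w$k) * (\<Sum>p\<in>UNIV. c l p k * c p i j))"
      by (simp add: sum_distrib_left mult_ac)
    also have "\<dots> = (\<Sum>i\<in>UNIV. \<Sum>j\<in>UNIV. \<Sum>k\<in>UNIV. (u$i * v$j * w$k) * (\<Sum>p\<in>UNIV. c l i p * c p j k))"
      by (simp add: coassoc)
    also have "\<dots> = (\<Sum>i\<in>UNIV. \<Sum>j\<in>UNIV. \<Sum>k\<in>UNIV. \<Sum>p\<in>UNIV. c l i p * u$i * (c p j k * v$j * w$k))"
      by (simp add: sum_distrib_left mult_ac)
    also have "\<dots> = (\<Sum>i\<in>UNIV. \<Sum>p\<in>UNIV. \<Sum>j\<in>UNIV. \<Sum>k\<in>UNIV. c l i p * u$i * (c p j k * v$j * w$k))"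
      by (rule sum.cong[OF refl], rule rot2[symmetric])
    also have "\<dots> = conv u (conv v w) $ l"
      unfolding conv_def by (simp add: sum_distrib_left)
    finally show ?thesis .
  qed
  then show ?thesis by (simp add: vec_eq_iff)
qed

lemma kd_sum1[simp]: "(\<Sum>j\<in>UNIV. (x (j::'b)::'k) * kd l j) = x l"
proof -
  have "(\<Sum>j\<in>UNIV. (x (j::'b)::'k) * kd l j) = (\<Sum>j\<in>UNIV. if l = j then x j else 0)" by (rule sum.cong) (auto simp: kd_def)
  then show ?thesis by (simp add: sum.delta sum.delta')
qed
lemma kd_sum2[simp]: "(\<Sum>j\<in>UNIV. (x (j::'b)::'k) * kd j l) = x l"
proof -
  have "(\<Sum>j\<in>UNIV. (x (j::'b)::'k) * kd j l) = (\<Sum>j\<in>UNIV. if l = j then x j else 0)" by (rule sum.cong) (auto simp: kd_def)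
  then show ?thesis by (simp add: sum.delta sum.delta')
qed
lemma kd_sum3[simp]: "(\<Sum>j\<in>UNIV. kd l j * (x (j::'b)::'k)) = x l"
  using kd_sum1[of x l] by (simp add: mult.commute)
lemma kd_sum4[simp]: "(\<Sum>j\<in>UNIV. kd j l * (x (j::'b)::'k)) = x l"
  using kd_sum2[of x l] by (simp add: mult.commute)

lemma conv_eps1[simp]: "conv epsv w = w"
proof -
  have "conv epsv w $ l = w $ l" for l
  proof -
    have "conv epsv w $ l = (\<Sum>j\<in>UNIV. \<Sum>i\<in>UNIV. c l i j * hcounit A i * w$j)"
      unfolding conv_def epsv_def by (simp, rule sum.swap)
    also have "\<dots> = (\<Sum>j\<in>UNIV. w$j * (\<Sum>i\<in>UNIV. hcounit A i * c l i j))"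
      by (simp add: sum_distrib_left mult_ac)
    also have "\<dots> = w$l" by (simp add: counitL mult.commute)
    finally show ?thesis .
  qed
  then show ?thesis by (simp add: vec_eq_iff)
qed

lemma conv_eps2[simp]: "conv w epsv = w"
proof -
  have "conv w epsv $ l = w $ l" for l
  proof -
    have "conv w epsv $ l = (\<Sum>i\<in>UNIV. w$i * (\<Sum>j\<in>UNIV. hcounit A j * c l i j))"
      unfolding conv_def epsv_def by (simp add: sum_distrib_left mult_ac)
    also have "\<dots> = w$l" by (simp add: counitR mult.commute)
    finally show ?thesis .
  qed
  then show ?thesis by (simp add: vec_eq_iff)
qed

lemma Rop_eps[simp]: "Rop epsv h = h"
proof -
  have "Rop epsv h $ i = h $ i" for i
  proof -
    have "Rop epsv h $ i = (\<Sum>l\<in>UNIV. h$l * (\<Sum>j\<in>UNIV. hcounit A j * c l i j))"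
      unfolding Rop_def epsv_def by (simp add: sum_distrib_left mult_ac)
    also have "\<dots> = h$i" by (simp add: counitR)
    finally show ?thesis .
  qed
  then show ?thesis by (simp add: vec_eq_iff)
qed

lemma Lop_eps[simp]: "Lop epsv h = h"
proof -
  have "Lop epsv h $ j = h $ j" for j
  proof -
    have "Lop epsv h $ j = (\<Sum>l\<in>UNIV. h$l * (\<Sum>i\<in>UNIV. hcounit A i * c l i j))"
      unfolding Lop_def epsv_def by (simp add: sum_distrib_left mult_ac)
    also have "\<dots> = h$j" by (simp add: counitL)
    finally show ?thesis .
  qed
  then show ?thesis by (simp add: vec_eq_iff)
qed

lemma Rop_add1: "Rop (w + v) h = Rop w h + Rop v h"
  unfolding Rop_def by (simp add: vec_eq_iff algebra_simps sum.distrib)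
lemma Rop_add2: "Rop w (x + y) = Rop w x + Rop w y"
  unfolding Rop_def by (simp add: vec_eq_iff algebra_simps sum.distrib)
lemma Rop_scale1: "Rop (a *s w) h = a *s Rop w h"
  unfolding Rop_def by (simp add: vec_eq_iff sum_distrib_left mult_ac)
lemma Rop_scale2: "Rop w (a *s h) = a *s Rop w h"
  unfolding Rop_def by (simp add: vec_eq_iff sum_distrib_left mult_ac)
lemma Lop_add1: "Lop (w + v) h = Lop w h + Lop v h"
  unfolding Lop_def by (simp add: vec_eq_iff algebra_simps sum.distrib)
lemma Lop_add2: "Lop w (x + y) = Lop w x + Lop w y"
  unfolding Lop_def by (simp add: vec_eq_iff algebra_simps sum.distrib)
lemma Lop_scale1: "Lop (a *s w) h = a *s Lop w h"
  unfolding Lop_def by (simp add: vec_eq_iff sum_distrib_left mult_ac)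
lemma Lop_scale2: "Lop w (a *s h) = a *s Lop w h"
  unfolding Lop_def by (simp add: vec_eq_iff sum_distrib_left mult_ac)
lemma Rop_0[simp]: "Rop 0 h = 0" "Rop w 0 = 0"
  unfolding Rop_def by (simp_all add: vec_eq_iff)
lemma Lop_0[simp]: "Lop 0 h = 0" "Lop w 0 = 0"
  unfolding Lop_def by (simp_all add: vec_eq_iff)
lemma conv_0[simp]: "conv 0 w = 0" "conv w 0 = 0"
  unfolding conv_def by (simp_all add: vec_eq_iff)
lemma conv_scale2: "conv w (a *s v) = a *s conv w v"
  unfolding conv_def by (simp add: vec_eq_iff sum_distrib_left mult_ac)
lemma pr_add2: "pr w (x + y) = pr w x + pr w y"
  unfolding pr_def by (simp add: algebra_simps sum.distrib)
lemma pr_scale2: "pr w (a *s x) = a * pr w x"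
  unfolding pr_def by (simp add: sum_distrib_left mult_ac)
lemma pr_0[simp]: "pr 0 x = 0" "pr w 0 = 0"
  unfolding pr_def by simp_all

end


context hc begin

definition contrR :: "'k^'b \<Rightarrow> 'k^('b\<times>'b) \<Rightarrow> 'k^'b" where
  "contrR w t = (\<chi> i. \<Sum>j\<in>UNIV. t$(i,j) * w$j)"
definition contrL :: "'k^'b \<Rightarrow> 'k^('b\<times>'b) \<Rightarrow> 'k^'b" where
  "contrL w t = (\<chi> j. \<Sum>i\<in>UNIV. t$(i,j) * w$i)"

lemma Rop_contr: "Rop w h = contrR w (hcomulv A h)"
proof -
  have "Rop w h $ i = contrR w (hcomulv A h) $ i" for i
  proof -
    have "Rop w h $ i = (\<Sum>l\<in>UNIV. \<Sum>j\<in>UNIV. h $ l * c l i j * w $ j)" by (simp add: Rop_def)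
    also have "\<dots> = (\<Sum>j\<in>UNIV. \<Sum>l\<in>UNIV. h $ l * c l i j * w $ j)" by (rule sum.swap)
    also have "\<dots> = contrR w (hcomulv A h) $ i" by (simp add: contrR_def hcomulv_def sum_distrib_right)
    finally show ?thesis .
  qed
  then show ?thesis by (simp add: vec_eq_iff)
qed

lemma Lop_contr: "Lop w h = contrL w (hcomulv A h)"
proof -
  have "Lop w h $ i = contrL w (hcomulv A h) $ i" for i
  proof -
    have "Lop w h $ i = (\<Sum>l\<in>UNIV. \<Sum>j\<in>UNIV. h $ l * c l j i * w $ j)" by (simp add: Lop_def)
    also have "\<dots> = (\<Sum>j\<in>UNIV. \<Sum>l\<in>UNIV. h $ l * c l j i * w $ j)" by (rule sum.swap)
    also have "\<dots> = contrL w (hcomulv A h) $ i" by (simp add: contrL_def hcomulv_def sum_distrib_right)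
    finally show ?thesis .
  qed
  then show ?thesis by (simp add: vec_eq_iff)
qed

lemma contrR_tens: "contrR w (tens u v) = pr w v *s u"
  unfolding contrR_def tens_def pr_def by (simp add: vec_eq_iff sum_distrib_left mult_ac)
lemma contrL_tens: "contrL w (tens u v) = pr w u *s v"
  unfolding contrL_def tens_def pr_def by (simp add: vec_eq_iff sum_distrib_left mult_ac)
lemma contrR_lin: "contrR w (a *s x + y) = a *s contrR w x + contrR w y"
  unfolding contrR_def by (simp add: vec_eq_iff sum_distrib_left sum.distrib algebra_simps)
lemma contrL_lin: "contrL w (a *s x + y) = a *s contrL w x + contrL w y"
  unfolding contrL_def by (simp add: vec_eq_iff sum_distrib_left sum.distrib algebra_simps)
lemma contr_0[simp]: "contrR w 0 = 0" "contrL w 0 = 0"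
  unfolding contrR_def contrL_def by (simp_all add: vec_eq_iff)

definition eqD :: "('k^'b) set \<Rightarrow> 'k^'b \<Rightarrow> 'k^'b \<Rightarrow> bool" where
  "eqD D w v \<longleftrightarrow> (\<forall>d\<in>D. pr w d = pr v d)"

lemma contr_span:
  assumes S: "vec.subspace D" and t: "t \<in> tens_sub D D"
  shows "contrR w t \<in> D \<and> contrL w t \<in> D \<and>
         (eqD D w w' \<longrightarrow> contrR w t = contrR w' t \<and> contrL w t = contrL w' t)"
  using t unfolding tens_sub_def
proof (induction rule: vec.span_induct_alt)
  case base
  then show ?case using S by (simp add: vec.subspace_0)
next
  case (step a x y)
  then obtain u v where x: "x = tens u v" "u \<in> D" "v \<in> D" by blast
  show ?case using step.IH x S
    by (simp add: contrR_lin contrL_lin contrR_tens contrL_tens eqD_def vec.subspace_add vec.subspace_scale)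
qed

lemma sub_Rop: "subcoalg A D \<Longrightarrow> d \<in> D \<Longrightarrow> Rop w d \<in> D"
  unfolding subcoalg_def Rop_contr using contr_span by blast
lemma sub_Lop: "subcoalg A D \<Longrightarrow> d \<in> D \<Longrightarrow> Lop w d \<in> D"
  unfolding subcoalg_def Lop_contr using contr_span by blast
lemma eqD_Rop: "subcoalg A D \<Longrightarrow> eqD D w w' \<Longrightarrow> d \<in> D \<Longrightarrow> Rop w d = Rop w' d"
  unfolding subcoalg_def Rop_contr using contr_span by blast
lemma eqD_Lop: "subcoalg A D \<Longrightarrow> eqD D w w' \<Longrightarrow> d \<in> D \<Longrightarrow> Lop w d = Lop w' d"
  unfolding subcoalg_def Lop_contr using contr_span by blast

lemma subcoalgI:
  assumes W: "vec.subspace W"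
    and inv: "\<And>w v. w \<in> W \<Longrightarrow> Rop v w \<in> W \<and> Lop v w \<in> W"
  shows "subcoalg A W"
proof -
  obtain P where P: "P ` UNIV \<subseteq> W" "Vector_Spaces.linear (*s) (*s) P" "\<And>v. v \<in> W \<Longrightarrow> P v = v"
    using vec.linear_exists_left_inverse_on[of id W] W by (auto simp: vec.linear_id)
  have "hcomulv A w \<in> tens_sub W W" if w: "w \<in> W" for w
  proof -
    let ?t = "hcomulv A w"
    define col where "col j = Rop (axis j 1) w" for j
    define row where "row i = Lop (axis i 1) w" for i
    have col: "col j $ i = ?t $ (i,j)" for i j
      unfolding col_def Rop_def hcomulv_def axis_def
      by (simp add: if_distrib cong: if_cong)
    have row: "row i $ j = ?t $ (i,j)" for i j
      unfolding row_def Lop_def hcomulv_def axis_def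
      by (simp add: if_distrib cong: if_cong)
    have rowW: "row i \<in> W" for i using inv[OF w] by (simp add: row_def)
    have colW: "col j \<in> W" for j using inv[OF w] by (simp add: col_def)
    have Prow: "?t $ (i,k) = (\<Sum>j\<in>UNIV. ?t $ (i,j) * P (axis j 1) $ k)" for i k
    proof -
      have "row i = (\<Sum>j\<in>UNIV. (row i $ j) *s axis j 1)" by (simp add: basis_expansion)
      moreover have "P (\<Sum>j\<in>UNIV. (row i $ j) *s axis j 1) = (\<Sum>j\<in>UNIV. (row i $ j) *s P (axis j 1))"
        by (simp add: vec.linear_sum[OF P(2)] vec.linear_scale[OF P(2)])
      ultimately have "P (row i) = (\<Sum>j\<in>UNIV. (row i $ j) *s P (axis j 1))" by simp
      then have "row i = (\<Sum>j\<in>UNIV. (row i $ j) *s P (axis j 1))" using P(3)[OF rowW] by simp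
      then have "row i $ k = (\<Sum>j\<in>UNIV. (row i $ j) *s P (axis j 1)) $ k" by simp
      then show ?thesis by (simp add: row)
    qed
    have "?t = (\<Sum>j\<in>UNIV. tens (col j) (P (axis j 1)))"
      by (simp add: vec_eq_iff tens_def col Prow[symmetric] split: prod.split)
    also have "\<dots> \<in> tens_sub W W"
      unfolding tens_sub_def
      by (rule vec.span_sum, rule vec.span_base) (use colW P(1) in blast)
    finally show ?thesis .
  qed
  then show ?thesis using W by (simp add: subcoalg_def)
qed

end


locale st = hc A for A :: "('b::finite, 'k::field) hopf_sc" +
  fixes \<pi> :: "'k^'b \<Rightarrow> 'k^sw"
  assumes hm: "hopf_map A sweedler \<pi>"
begin

lemma lin: "Vector_Spaces.linear (*s) (*s) \<pi>" using hm by (simp add: hopf_map_def)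

lemma sum_ax1: "(\<Sum>l\<in>UNIV. axis j (1::'k) $ l * f l) = f j"
proof -
  have "(\<Sum>l\<in>UNIV. axis j (1::'k) $ l * f l) = (\<Sum>l\<in>UNIV. if l = j then f l else 0)"
    by (rule sum.cong) (auto simp: axis_def)
  then show ?thesis by simp
qed
lemma sum_ax2: "(\<Sum>l\<in>UNIV. f l * axis j (1::'k) $ l) = f j"
  using sum_ax1[of j f] by (simp add: mult.commute)

definition a :: "sw \<Rightarrow> 'k^'b" where "a s = (\<chi> j. (\<pi> (axis j 1)) $ s)"

lemma a_nth: "a s $ l = \<pi> (axis l 1) $ s" by (simp add: a_def)

lemma pr_a: "pr (a s) h = (\<pi> h) $ s"
proof -
  have "\<pi> h = \<pi> (\<Sum>j\<in>UNIV. (h $ j) *s axis j 1)" by (simp add: basis_expansion)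
  also have "\<dots> = (\<Sum>j\<in>UNIV. (h $ j) *s \<pi> (axis j 1))"
    by (simp add: vec.linear_sum[OF lin] vec.linear_scale[OF lin])
  finally show ?thesis by (simp add: pr_def a_def mult.commute)
qed

lemma conv_a: "conv (a s) (a t) = (\<chi> l. \<Sum>m\<in>UNIV. (\<pi> (axis l 1))$m * hcomul sweedler m s t)"
proof -
  have "conv (a s) (a t) $ l = (\<Sum>m\<in>UNIV. (\<pi> (axis l 1))$m * hcomul sweedler m s t)" for l
  proof -
    have e: "tmap \<pi> \<pi> (hcomulv A (axis l 1)) = hcomulv sweedler (\<pi> (axis l 1))"
      using hm by (simp add: hopf_map_def)
    have "hcomulv A (axis l 1) $ (i,j) = c l i j" for i j
      by (simp add: hcomulv_def sum_ax1 sum_ax2)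
    then have "tmap \<pi> \<pi> (hcomulv A (axis l 1)) $ (s,t) = conv (a s) (a t) $ l"
      by (simp add: tmap_def tens_def conv_def a_def mult_ac)
    then show ?thesis using e by (simp add: hcomulv_def)
  qed
  then show ?thesis by (simp add: vec_eq_iff)
qed

lemma eps_a: "epsv = a S1 + a Sg"
proof -
  have "hcounitv sweedler (\<pi> (axis l 1)) = hcounitv A (axis l 1)" for l
    using hm by (simp add: hopf_map_def)
  then show ?thesis
    by (simp add: vec_eq_iff epsv_def a_def hcounitv_def sweedler_def UNIV_sw sum_ax1 sum_ax2)
qed

lemma rels:
  "conv (a S1) (a S1) = a S1" "conv (a S1) (a Sg) = 0" "conv (a Sg) (a S1) = 0" "conv (a Sg) (a Sg) = a Sg"
  "conv (a Sx) (a S1) = a Sx" "conv (a Sg) (a Sx) = a Sx" "conv (a S1) (a Sx) = 0" "conv (a Sx) (a Sg) = 0"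
  "conv (a S1) (a Sgx) = a Sgx" "conv (a Sgx) (a Sg) = a Sgx" "conv (a Sgx) (a S1) = 0" "conv (a Sg) (a Sgx) = 0"
  "conv (a Sx) (a Sgx) = 0" "conv (a Sgx) (a Sx) = 0"
  by (simp_all add: conv_a vec_eq_iff sweedler_def UNIV_sw a_nth)

end


context st begin

lemma sum_ax3: "(\<Sum>l\<in>UNIV. axis l (1::'k) $ i * f l) = f i"
proof -
  have "(\<Sum>l\<in>UNIV. axis l (1::'k) $ i * f l) = (\<Sum>l\<in>UNIV. if i = l then f l else 0)"
    by (rule sum.cong) (auto simp: axis_def)
  then show ?thesis by simp
qed

lemma tmap_R: "tmap id \<pi> (hcomulv A r) $ (i,s) = Rop (a s) r $ i"
proof -
  have "tmap id \<pi> (hcomulv A r) $ (i,s) = (\<Sum>i'\<in>UNIV. axis i' 1 $ i * (\<Sum>j\<in>UNIV. hcomulv A r $ (i',j) * a s $ j))"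
    by (simp add: tmap_def tens_def sum_distrib_left mult_ac a_nth)
  also have "\<dots> = contrR (a s) (hcomulv A r) $ i" by (simp add: sum_ax3 contrR_def)
  finally show ?thesis by (simp add: Rop_contr)
qed

lemma tmap_L: "tmap \<pi> id (hcomulv A r) $ (s,j) = Lop (a s) r $ j"
proof -
  have "tmap \<pi> id (hcomulv A r) $ (s,j) = (\<Sum>i\<in>UNIV. hcomulv A r $ (i,j) * a s $ i)"
    by (simp add: tmap_def tens_def sum_distrib_left mult_ac a_nth sum_ax3)
  also have "\<dots> = contrL (a s) (hcomulv A r) $ j" by (simp add: contrL_def)
  finally show ?thesis by (simp add: Lop_contr)
qed

lemma rcoinvI:
  assumes "r \<in> D" "Rop (a S1) r = r" "Rop (a Sg) r = 0" "Rop (a Sx) r = 0" "Rop (a Sgx) r = 0"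
  shows "r \<in> right_coinv A sweedler \<pi> D"
proof -
  have "tmap id \<pi> (hcomulv A r) $ (i,s) = tens r (honev sweedler) $ (i,s)" for i s
    by (cases s) (simp_all add: tmap_R assms tens_def honev_def sweedler_def)
  then show ?thesis using assms(1) by (auto simp: right_coinv_def vec_eq_iff)
qed

lemma lcoinvI:
  assumes "r \<in> D" "Lop (a S1) r = r" "Lop (a Sg) r = 0" "Lop (a Sx) r = 0" "Lop (a Sgx) r = 0"
  shows "r \<in> left_coinv A sweedler \<pi> D"
proof -
  have "tmap \<pi> id (hcomulv A r) $ (s,j) = tens (honev sweedler) r $ (s,j)" for j s
    by (cases s) (simp_all add: tmap_L assms tens_def honev_def sweedler_def)
  then show ?thesis using assms(1) by (auto simp: left_coinv_def vec_eq_iff)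
qed

lemma gen:
  assumes g: "generates_alg A D" and s: "surj \<pi>" and z: "\<forall>d\<in>D. pr (a Sx) d = 0 \<and> pr (a Sgx) d = 0"
  shows False
proof -
  let ?S = "{h. \<pi> h $ Sx = 0 \<and> \<pi> h $ Sgx = 0}"
  have sub: "vec.subspace ?S"
    by (rule vec.subspaceI) (simp_all add: vec.linear_add[OF lin] vec.linear_scale[OF lin] vec.linear_0[OF lin])
  have one: "honev A \<in> ?S"
    using hm by (simp add: hopf_map_def honev_def sweedler_def)
  have mul: "hmulv A x y \<in> ?S" if "x \<in> ?S" "y \<in> ?S" for x y
  proof -
    have "\<pi> (hmulv A x y) = hmulv sweedler (\<pi> x) (\<pi> y)" using hm by (simp add: hopf_map_def)
    then show ?thesis using that by (simp add: hmulv_def sweedler_def UNIV_sw)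
  qed
  have "subalg A ?S" using sub one mul by (simp add: subalg_def)
  moreover have "D \<subseteq> ?S" using z by (auto simp: pr_a)
  ultimately have "?S = UNIV" using g by (simp add: generates_alg_def)
  moreover obtain h where "\<pi> h = axis Sx 1" using s by (metis surjD)
  ultimately show False by (metis (mono_tags, lifting) UNIV_I axis_nth mem_Collect_eq zero_neq_one)
qed

end


lemma notin_span:
  assumes add: "\<And>x y. T (x + y) = T x + T y" and sc: "\<And>k x. T (k *s x) = k *s T x"
    and z: "\<And>s. s \<in> S \<Longrightarrow> T s = 0" and x: "T x \<noteq> (0::'k::field^'n::finite)"
  shows "x \<notin> vec.span S"
proof
  assume "x \<in> vec.span S"
  then have "T x = 0"
  proof (induction rule: vec.span_induct_alt)
    case base
    have "T 0 = T ((0::'k) *s 0)" by simp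
    also have "\<dots> = 0" by (simp only: sc) simp
    finally show ?case .
  next
    case (step c x y) then show ?case by (simp add: add sc z)
  qed
  with x show False by simp
qed

lemma indep_insert_card:
  assumes "vec.independent S" "finite S" "x \<notin> vec.span S"
  shows "vec.independent (insert x S) \<and> card (insert x S) = Suc (card S)"
  using assms vec.independent_insertI vec.span_base by (metis card_insert_disjoint)

context hc begin
lemma pr_scale1: "pr (k *s w) x = k * pr w x"
  unfolding pr_def by (simp add: sum_distrib_left mult_ac)
lemma pr_add1: "pr (w + v) x = pr w x + pr v x"
  unfolding pr_def by (simp add: algebra_simps sum.distrib)
lemma conv_add1: "conv (w + v) x = conv w x + conv v x"
  unfolding conv_def by (simp add: vec_eq_iff algebra_simps sum.distrib)
lemma pr_eps_R: "pr epsv (Rop w h) = pr w h" by (simp add: pr_Rop)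
lemma pr_LR: "pr w (Lop s (Rop t h)) = pr (conv (conv s w) t) h" by (simp add: pr_Lop pr_Rop)
end

locale mn = st A \<pi> for A :: "('b::finite, 'k::field) hopf_sc" and \<pi> +
  fixes D :: "('k^'b) set"
  assumes subD: "subcoalg A D"
    and simple: "\<And>E. subcoalg A E \<Longrightarrow> E \<subseteq> D \<Longrightarrow> E = {0} \<or> E = D"
    and dim4: "vec.dim D = 4"
    and nz: "\<not> (\<forall>d\<in>D. pr (a Sx) d = 0 \<and> pr (a Sgx) d = 0)"
begin

abbreviation "e1 \<equiv> a S1"
abbreviation "eg \<equiv> a Sg"
abbreviation "ex \<equiv> a Sx"
abbreviation "egx \<equiv> a Sgx"

lemma Dsub: "vec.subspace D" using subD by (simp add: subcoalg_def)
lemma RD: "d \<in> D \<Longrightarrow> Rop w d \<in> D" using sub_Rop[OF subD] .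
lemma LD: "d \<in> D \<Longrightarrow> Lop w d \<in> D" using sub_Lop[OF subD] .

lemma eqD_conv: "eqD D (conv y z) (conv y z')" if h: "eqD D z z'"
  unfolding eqD_def
proof
  fix d assume d: "d \<in> D"
  have "pr (conv y z) d = pr y (Rop z d)" by (simp add: pr_Rop)
  also have "\<dots> = pr y (Rop z' d)" using eqD_Rop[OF subD h d] by simp
  also have "\<dots> = pr (conv y z') d" by (simp add: pr_Rop)
  finally show "pr (conv y z) d = pr (conv y z') d" .
qed

lemma ex1: "\<exists>d\<in>D. pr e1 d \<noteq> 0"
proof (rule ccontr)
  assume "\<not> ?thesis"
  then have z: "eqD D e1 0" by (simp add: eqD_def)
  have "pr ex d = 0 \<and> pr egx d = 0" if d: "d \<in> D" for d
  proof
    have "pr ex d = pr (conv ex e1) d" by (simp add: rels)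
    also have "\<dots> = pr ex (Rop e1 d)" by (simp add: pr_Rop)
    also have "\<dots> = 0" using eqD_Rop[OF subD z d] by simp
    finally show "pr ex d = 0" .
    have "pr egx d = pr (conv e1 egx) d" by (simp add: rels)
    also have "\<dots> = pr e1 (Rop egx d)" by (simp add: pr_Rop)
    also have "\<dots> = 0" using z RD[OF d] by (simp add: eqD_def)
    finally show "pr egx d = 0" .
  qed
  with nz show False by blast
qed

lemma exg: "\<exists>d\<in>D. pr eg d \<noteq> 0"
proof (rule ccontr)
  assume "\<not> ?thesis"
  then have z: "eqD D eg 0" by (simp add: eqD_def)
  have "pr ex d = 0 \<and> pr egx d = 0" if d: "d \<in> D" for d
  proof
    have "pr ex d = pr (conv eg ex) d" by (simp add: rels)
    also have "\<dots> = pr eg (Rop ex d)" by (simp add: pr_Rop)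
    also have "\<dots> = 0" using z RD[OF d] by (simp add: eqD_def)
    finally show "pr ex d = 0" .
    have "pr egx d = pr (conv egx eg) d" by (simp add: rels)
    also have "\<dots> = pr egx (Rop eg d)" by (simp add: pr_Rop)
    also have "\<dots> = 0" using eqD_Rop[OF subD z d] by simp
    finally show "pr egx d = 0" .
  qed
  with nz show False by blast
qed

lemma Rop_split: "Rop p h + Rop q h = h" if "epsv = p + q"
  using Rop_eps[of h] that by (simp add: Rop_add1)

lemma noblock:
  assumes pp: "conv p p = p" and qq: "conv q q = q" and pq: "conv p q = 0" and qp: "conv q p = 0"
    and e: "epsv = p + q" and dp: "dp \<in> D" "pr p dp \<noteq> 0" and dq: "dq \<in> D" "pr q dq \<noteq> 0"
    and blk: "\<And>y. y \<in> D \<Longrightarrow> Lop q (Rop p y) = 0"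
  shows False
proof -
  let ?W = "Rop p ` D"
  have WD: "?W \<subseteq> D" using RD by blast
  have sW: "vec.subspace ?W"
  proof (rule vec.subspaceI)
    show "0 \<in> ?W" using vec.subspace_0[OF Dsub] by (metis Rop_0(2) image_eqI)
    show "x + y \<in> ?W" if "x \<in> ?W" "y \<in> ?W" for x y
      using that vec.subspace_add[OF Dsub] by (auto simp: Rop_add2[symmetric])
    show "k *s x \<in> ?W" if "x \<in> ?W" for k x
      using that vec.subspace_scale[OF Dsub] by (auto simp: Rop_scale2[symmetric])
  qed
  have inv: "Rop v w \<in> ?W \<and> Lop v w \<in> ?W" if "w \<in> ?W" for w v
  proof
    obtain d where d: "d \<in> D" "w = Rop p d" using \<open>w \<in> ?W\<close> by blast
    show "Lop v w \<in> ?W" using d LD by (simp add: Lop_Rop)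
    let ?x = "Rop v w"
    have xD: "?x \<in> D" using d RD by simp
    have z: "eqD D (conv (conv q v) p) 0"
      unfolding eqD_def
    proof
      fix d' assume "d' \<in> D"
      have "pr (conv (conv q v) p) d' = pr v (Lop q (Rop p d'))" by (simp add: pr_LR)
      then show "pr (conv (conv q v) p) d' = pr 0 d'" using blk[OF \<open>d' \<in> D\<close>] by simp
    qed
    have "Rop q ?x = Rop (conv (conv q v) p) d" using d by (simp add: Rop_Rop conv_assoc)
    also have "\<dots> = 0" using eqD_Rop[OF subD z d(1)] by simp
    finally have "?x = Rop p ?x" using Rop_split[OF e, of ?x] by simp
    then show "?x \<in> ?W" using xD by blast
  qed
  have "subcoalg A ?W" by (rule subcoalgI[OF sW]) (use inv in blast)
  then have "?W = {0} \<or> ?W = D" using simple WD by blast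
  moreover have "Rop p dp \<noteq> 0" using dp pr_eps_R[of p dp] by auto
  then have "?W \<noteq> {0}" using dp by blast
  moreover have "Rop q dq \<notin> ?W"
  proof
    assume "Rop q dq \<in> ?W"
    then obtain y where y: "y \<in> D" "Rop q dq = Rop p y" by blast
    have "Rop q dq = Rop q (Rop q dq)" by (simp add: Rop_Rop qq)
    also have "\<dots> = 0" using y by (simp add: Rop_Rop qp)
    finally show False using dq pr_eps_R[of q dq] by auto
  qed
  then have "?W \<noteq> D" using dq RD by blast
  ultimately show False by blast
qed

end


lemma indep2:
  assumes add: "\<And>x y. T (x + y) = T x + T y" and sc: "\<And>k x. T (k *s x) = k *s T x"
    and "T p = p" "T q = 0" "p \<noteq> 0" "q \<noteq> (0::'k::field^'n::finite)"
  shows "vec.independent {p, q} \<and> card {p, q} = 2"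
proof -
  have i1: "vec.independent {q} \<and> card {q} = 1"
    using indep_insert_card[of "{}" q] assms by (simp add: vec.span_empty)
  have "p \<notin> vec.span {q}" by (rule notin_span[of T]) (use assms in auto)
  then show ?thesis using indep_insert_card[of "{q}" p] i1 by simp
qed

context mn begin

lemmas calc = Lop_Rop Rop_Rop Lop_Lop rels conv_assoc

lemma caseC:
  assumes nx: "\<not> eqD D ex 0" and ngx: "\<not> eqD D egx 0"
    and d1: "d1 \<in> D" "pr e1 d1 \<noteq> 0" and dg: "dg \<in> D" "pr eg dg \<noteq> 0"
    and y1: "y1 \<in> D" "Lop e1 (Rop eg y1) \<noteq> 0" and y2: "y2 \<in> D" "Lop eg (Rop e1 y2) \<noteq> 0"
  shows False
proof -
  define d11 where "d11 = Lop e1 (Rop e1 d1)"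
  define dgg where "dgg = Lop eg (Rop eg dg)"
  define d1g where "d1g = Lop e1 (Rop eg y1)"
  define dg1 where "dg1 = Lop eg (Rop e1 y2)"
  have d11: "d11 \<noteq> 0" "d11 \<in> D"
    using d1 pr_LR[of e1 e1 e1 d1] RD LD by (auto simp: d11_def rels)
  have dgg: "dgg \<noteq> 0" "dgg \<in> D"
    using dg pr_LR[of eg eg eg dg] RD LD by (auto simp: dgg_def rels)
  have d1g: "d1g \<noteq> 0" "d1g \<in> D" using y1 RD LD by (auto simp: d1g_def)
  have dg1: "dg1 \<noteq> 0" "dg1 \<in> D" using y2 RD LD by (auto simp: dg1_def)
  \<comment> \<open>the (g,1) block is one-dimensional\<close>
  have span1: "Lop eg (Rop e1 z) \<in> vec.span {dg1}" if z: "z \<in> D" for z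
  proof (rule ccontr)
    assume nsp: "Lop eg (Rop e1 z) \<notin> vec.span {dg1}"
    define z' where "z' = Lop eg (Rop e1 z)"
    have z'D: "z' \<in> D" using z RD LD by (simp add: z'_def)
    have I0: "vec.independent {dg1} \<and> card {dg1} = 1"
      using indep_insert_card[of "{}" dg1] dg1 by (simp add: vec.span_empty)
    have I1: "vec.independent {z', dg1} \<and> card {z', dg1} = 2"
      using indep_insert_card[of "{dg1}" z'] I0 nsp by (simp add: z'_def)
    have "d11 \<notin> vec.span {z', dg1}"
      by (rule notin_span[of "Lop e1"], simp add: Lop_add2, simp add: Lop_scale2)
         (use d11(1) in \<open>auto simp: d11_def z'_def dg1_def calc\<close>)
    then have I2: "vec.independent {d11, z', dg1} \<and> card {d11, z', dg1} = 3"
      using indep_insert_card[of "{z', dg1}" d11] I1 by simp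
    have "d1g \<notin> vec.span {d11, z', dg1}"
      by (rule notin_span[of "Rop eg"], simp add: Rop_add2, simp add: Rop_scale2)
         (use d1g(1) in \<open>auto simp: d11_def z'_def dg1_def d1g_def calc\<close>)
    then have I3: "vec.independent {d1g, d11, z', dg1} \<and> card {d1g, d11, z', dg1} = 4"
      using indep_insert_card[of "{d11, z', dg1}" d1g] I2 by simp
    have "dgg \<notin> vec.span {d1g, d11, z', dg1}"
      by (rule notin_span[of "\<lambda>h. Lop eg (Rop eg h)"], simp add: Rop_add2 Lop_add2, simp add: Rop_scale2 Lop_scale2)
         (use dgg(1) in \<open>auto simp: d11_def z'_def dg1_def d1g_def dgg_def calc\<close>)
    then have I4: "vec.independent {dgg, d1g, d11, z', dg1} \<and> card {dgg, d1g, d11, z', dg1} = 5"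
      using indep_insert_card[of "{d1g, d11, z', dg1}" dgg] I3 by simp
    have "card {dgg, d1g, d11, z', dg1} \<le> vec.dim D"
      by (rule vec.independent_card_le_dim) (use I4 d11 dgg d1g dg1 z'D in auto)
    with I4 dim4 show False by simp
  qed
  have repr: "\<exists>k. Lop eg (Rop e1 z) = k *s dg1" if "z \<in> D" for z
    using span1[OF that] by (auto simp: vec.span_singleton)
  \<comment> \<open>ex does not vanish on dg1\<close>
  have exdg1: "pr ex dg1 \<noteq> 0"
  proof
    assume h: "pr ex dg1 = 0"
    have "pr ex d = pr 0 d" if d: "d \<in> D" for d
    proof -
      obtain k where k: "Lop eg (Rop e1 d) = k *s dg1" using repr[OF d] by blast
      have "pr ex d = pr (conv (conv eg ex) e1) d" by (simp add: rels)
      also have "\<dots> = pr ex (Lop eg (Rop e1 d))" by (simp add: pr_LR)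
      also have "\<dots> = 0" using h k by (simp add: pr_scale2)
      finally show ?thesis by simp
    qed
    with nx show False by (simp add: eqD_def)
  qed
  have lam: "eqD D (conv (conv eg cc) e1) ((pr cc dg1 / pr ex dg1) *s ex)" for cc
    unfolding eqD_def
  proof
    fix d assume d: "d \<in> D"
    obtain k where k: "Lop eg (Rop e1 d) = k *s dg1" using repr[OF d] by blast
    have "pr (conv (conv eg cc) e1) d = pr cc (Lop eg (Rop e1 d))" by (simp add: pr_LR)
    also have "\<dots> = k * pr cc dg1" using k by (simp add: pr_scale2)
    finally have 1: "pr (conv (conv eg cc) e1) d = k * pr cc dg1" .
    have "pr ex d = pr (conv (conv eg ex) e1) d" by (simp add: rels)
    also have "\<dots> = pr ex (Lop eg (Rop e1 d))" by (simp add: pr_LR)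
    also have "\<dots> = k * pr ex dg1" using k by (simp add: pr_scale2)
    finally have 2: "pr ex d = k * pr ex dg1" .
    show "pr (conv (conv eg cc) e1) d = pr ((pr cc dg1 / pr ex dg1) *s ex) d"
      using 1 2 exdg1 by (simp add: pr_scale1)
  qed
  \<comment> \<open>the subcoalgebra\<close>
  define W where "W = {d \<in> D. \<forall>b cc. pr egx (Lop b (Rop cc d)) = 0}"
  have WD: "W \<subseteq> D" by (auto simp: W_def)
  have sW: "vec.subspace W"
  proof (rule vec.subspaceI)
    show "0 \<in> W" using vec.subspace_0[OF Dsub] by (simp add: W_def)
    show "x + y \<in> W" if "x \<in> W" "y \<in> W" for x y
      using that vec.subspace_add[OF Dsub] by (simp add: W_def Rop_add2 Lop_add2 pr_add2)
    show "k *s x \<in> W" if "x \<in> W" for k x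
      using that vec.subspace_scale[OF Dsub] by (simp add: W_def Rop_scale2 Lop_scale2 pr_scale2)
  qed
  have inv: "Rop v w \<in> W \<and> Lop v w \<in> W" if w: "w \<in> W" for w v
  proof
    show "Rop v w \<in> W" using w RD by (simp add: W_def Rop_Rop)
    have "Lop b (Rop cc (Lop v w)) = Lop (conv v b) (Rop cc w)" for b cc
      by (simp add: Lop_Rop Lop_Lop)
    then show "Lop v w \<in> W" using w LD by (simp add: W_def)
  qed
  have "subcoalg A W" by (rule subcoalgI[OF sW]) (use inv in blast)
  then have "W = {0} \<or> W = D" using simple WD by blast
  moreover have "W \<noteq> D"
  proof
    assume "W = D"
    obtain d where d: "d \<in> D" "pr egx d \<noteq> 0" using ngx by (auto simp: eqD_def)
    then have "d \<in> W" using \<open>W = D\<close> by simp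
    then have "\<forall>b cc. pr egx (Lop b (Rop cc d)) = 0" by (simp add: W_def)
    then have "pr egx (Lop epsv (Rop epsv d)) = 0" by blast
    with d show False by simp
  qed
  moreover have "d11 \<in> W"
  proof -
    have "pr egx (Lop b (Rop cc d11)) = 0" for b cc
    proof -
      define B where "B = conv e1 b"
      define Y where "Y = conv B egx"
      define lm where "lm = pr cc dg1 / pr ex dg1"
      have "Lop b (Rop cc d11) = Lop B (Rop (conv cc e1) d1)"
        by (simp add: d11_def B_def Lop_Rop Lop_Lop Rop_Rop)
      then have "pr egx (Lop b (Rop cc d11)) = pr (conv Y (conv cc e1)) d1"
        by (simp add: pr_LR Y_def)
      also have "conv Y (conv cc e1) = conv Y (conv (conv eg cc) e1)"
      proof -
        have "Y = conv Y eg" unfolding Y_def by (metis rels(10) conv_assoc)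
        then have "conv Y (conv cc e1) = conv (conv Y eg) (conv cc e1)" by simp
        also have "\<dots> = conv Y (conv (conv eg cc) e1)" by (simp add: conv_assoc)
        finally show ?thesis .
      qed
      also have "pr (conv Y (conv (conv eg cc) e1)) d1 = pr (conv Y (lm *s ex)) d1"
        using eqD_conv[OF lam[of cc]] d1 by (simp add: eqD_def lm_def)
      also have "\<dots> = 0" by (simp add: conv_scale2 Y_def conv_assoc rels pr_scale1)
      finally show ?thesis .
    qed
    then show ?thesis using d11 by (simp add: W_def)
  qed
  then have "W \<noteq> {0}" using d11 by auto
  ultimately show False by blast
qed

end


context mn begin

lemma main: "vec.dim (left_coinv A sweedler \<pi> D) \<ge> 2 \<or> vec.dim (right_coinv A sweedler \<pi> D) \<ge> 2"
proof -
  obtain d1 where d1: "d1 \<in> D" "pr e1 d1 \<noteq> 0" using ex1 by blast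
  obtain dg where dg: "dg \<in> D" "pr eg dg \<noteq> 0" using exg by blast
  have e: "epsv = e1 + eg" by (rule eps_a)
  obtain y2 where y2: "y2 \<in> D" "Lop eg (Rop e1 y2) \<noteq> 0"
    using noblock[of e1 eg d1 dg] rels e d1 dg by blast
  obtain y1 where y1: "y1 \<in> D" "Lop e1 (Rop eg y1) \<noteq> 0"
    using noblock[of eg e1 dg d1] rels e d1 dg by (metis add.commute)
  have d11: "Rop e1 (Lop e1 d1) \<noteq> 0" "Rop e1 (Lop e1 d1) \<in> D"
    using d1 pr_LR[of e1 e1 e1 d1] RD LD by (auto simp: rels Lop_Rop)
  show ?thesis
  proof (cases "eqD D ex 0")
    case True
    have rc: "Rop e1 z \<in> right_coinv A sweedler \<pi> D" if z: "z \<in> D" for z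
    proof (rule rcoinvI)
      show "Rop e1 z \<in> D" using z RD by simp
      show "Rop e1 (Rop e1 z) = Rop e1 z" by (simp add: Rop_Rop rels)
      show "Rop eg (Rop e1 z) = 0" by (simp add: Rop_Rop rels)
      show "Rop ex (Rop e1 z) = 0" using eqD_Rop[OF subD True, of "Rop e1 z"] z RD by simp
      show "Rop egx (Rop e1 z) = 0" by (simp add: Rop_Rop rels)
    qed
    let ?p = "Rop e1 (Lop e1 d1)" and ?q = "Rop e1 (Lop eg y2)"
    have q: "?q \<noteq> 0" using y2 by (simp add: Lop_Rop)
    have "vec.independent {?p, ?q} \<and> card {?p, ?q} = 2"
      by (rule indep2[of "Lop e1"]) (use d11 q in \<open>simp_all add: Lop_add2 Lop_scale2 calc\<close>)
    moreover have "{?p, ?q} \<subseteq> right_coinv A sweedler \<pi> D" using rc d1 y2 LD by auto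
    ultimately have "2 \<le> vec.dim (right_coinv A sweedler \<pi> D)"
      using vec.independent_card_le_dim by metis
    then show ?thesis by simp
  next
    case nx: False
    show ?thesis
    proof (cases "eqD D egx 0")
      case True
      have lc: "Lop e1 z \<in> left_coinv A sweedler \<pi> D" if z: "z \<in> D" for z
      proof (rule lcoinvI)
        show "Lop e1 z \<in> D" using z LD by simp
        show "Lop e1 (Lop e1 z) = Lop e1 z" by (simp add: Lop_Lop rels)
        show "Lop eg (Lop e1 z) = 0" by (simp add: Lop_Lop rels)
        show "Lop ex (Lop e1 z) = 0" by (simp add: Lop_Lop rels)
        show "Lop egx (Lop e1 z) = 0" using eqD_Lop[OF subD True, of "Lop e1 z"] z LD by simp
      qed
      let ?p = "Lop e1 (Rop e1 d1)" and ?q = "Lop e1 (Rop eg y1)"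
      have p: "?p \<noteq> 0" using d11 by (simp add: Lop_Rop)
      have "vec.independent {?p, ?q} \<and> card {?p, ?q} = 2"
        by (rule indep2[of "Rop e1"]) (use p y1 in \<open>simp_all add: Rop_add2 Rop_scale2 calc\<close>)
      moreover have "{?p, ?q} \<subseteq> left_coinv A sweedler \<pi> D" using lc d1 y1 RD by auto
      ultimately have "2 \<le> vec.dim (left_coinv A sweedler \<pi> D)"
        using vec.independent_card_le_dim by metis
      then show ?thesis by simp
    next
      case False
      with caseC[OF nx False d1 dg y1 y2] show ?thesis by blast
    qed
  qed
qed

end

theorem lemma2p12:
  fixes A :: "('b::finite, 'k::field_char_0) hopf_sc"
    and D :: "('k^'b) set"
    and \<pi> :: "'k^'b \<Rightarrow> 'k^sw"
  assumes "alg_closed_field TYPE('k)"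
    and "is_hopf A"
    and "simple_subcoalg A D"
    and "vec.dim D = 4"
    and "generates_alg A D"
    and "hopf_map A sweedler \<pi>"
    and "surj \<pi>"
  shows "vec.dim (left_coinv A sweedler \<pi> D) \<ge> 2 \<or> vec.dim (right_coinv A sweedler \<pi> D) \<ge> 2"
proof -
  interpret hc A
    by unfold_locales (use assms(2) in \<open>simp_all add: is_hopf_def Let_def\<close>)
  interpret st A \<pi> by unfold_locales (rule assms(6))
  have nz: "\<not> (\<forall>d\<in>D. pr (a Sx) d = 0 \<and> pr (a Sgx) d = 0)"
    using gen assms(5,7) by blast
  interpret mn A \<pi> D
    by unfold_locales (use assms(3,4) nz in \<open>auto simp: simple_subcoalg_def\<close>)
  show ?thesis by (rule main)
qed


end
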